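(* Let $\langle B,\wedge,{}'\rangle$ be an algebra with $\wedge$ binary and ${}'$ unary satisfying $x\wedge(y\wedge z)\approx (z\wedge x)\wedge y$ and $x\approx (x'\wedge y)'\wedge(x'\wedge y')'$. Then $x\wedge(y\wedge z)=y\wedge(z\wedge x)$ for all $x,y,z\in B$. *)

theory Defs
  imports Main
begin

end

theory Submission
  imports Defs
begin

theorem lemma5p25:
  fixes meet :: "'b \<Rightarrow> 'b \<Rightarrow> 'b" and c :: "'b \<Rightarrow> 'b"
  assumes ax1: "\<And>x y z. meet x (meet y z) = meet (meet z x) y"
    and ax2: "\<And>x y. x = meet (c (meet (c x) y)) (c (meet (c x) (c y)))"
  shows "\<forall>x y z. meet x (meet y z) = meet y (meet z x)"
proof (intro allI)
  fix x y z
  have 1: "\<forall>b ba bb. meet (c (meet (c b) (c ba))) (meet bb (c (meet (c b) ba))) = meet b bb"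
    by (metis ax1 ax2)
  then have 2: "\<forall>b ba bb bc. meet bc (meet (c (meet (c bb) ba)) (meet b (c (meet (c bb) (c ba))))) = meet b (meet bb bc)"
    by (metis (no_types) ax1)
  then show "meet x (meet y z) = meet y (meet z x)"
    by (metis ax1 ax2)
qed

end
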